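(* Let $G$ be a finite connected simple graph with shortest-path distance $d$. The following are equivalent: (1) $G$ is ptolemaic, i.e. $d(x,y)d(z,w)+d(y,z)d(x,w)\ge d(x,z)d(y,w)$ for all vertices $x,y,z,w$; (2) for all vertices $x,y,z,w$ with $y\neq z$, $d(x,y)+d(y,z)=d(x,z)$ and $d(y,z)+d(z,w)=d(y,w)$, one has $d(x,y)+d(y,z)+d(z,w)=d(x,w)$; (3) for all vertices $x,y,z,w$ with $d(x,y)+d(y,z)=d(x,z)$, $d(y,z)+d(z,w)=d(y,w)$ and $d(x,y)=d(y,z)=1$, one has $d(x,y)+d(y,z)+d(z,w)=d(x,w)$; (4) $G$ is chordal (has no induced cycle of length at least $4$) and distance-hereditary (every induced path is a shortest path). *)

theory Defs
  imports Main
begin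

definition simple_graph :: "'a set \<Rightarrow> ('a \<Rightarrow> 'a \<Rightarrow> bool) \<Rightarrow> bool" where
  "simple_graph V E \<longleftrightarrow> finite V \<and> (\<forall>x y. E x y \<longrightarrow> x \<in> V \<and> y \<in> V)
     \<and> (\<forall>x y. E x y \<longrightarrow> E y x) \<and> (\<forall>x. \<not> E x x)"

definition walk :: "'a set \<Rightarrow> ('a \<Rightarrow> 'a \<Rightarrow> bool) \<Rightarrow> 'a list \<Rightarrow> bool" where
  "walk V E p \<longleftrightarrow> p \<noteq> [] \<and> set p \<subseteq> V \<and> (\<forall>i. Suc i < length p \<longrightarrow> E (p ! i) (p ! Suc i))"

definition connected_graph :: "'a set \<Rightarrow> ('a \<Rightarrow> 'a \<Rightarrow> bool) \<Rightarrow> bool" where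
  "connected_graph V E \<longleftrightarrow> (\<forall>x\<in>V. \<forall>y\<in>V. \<exists>p. walk V E p \<and> hd p = x \<and> last p = y)"

definition gdist :: "'a set \<Rightarrow> ('a \<Rightarrow> 'a \<Rightarrow> bool) \<Rightarrow> 'a \<Rightarrow> 'a \<Rightarrow> nat" where
  "gdist V E x y = (LEAST n. \<exists>p. walk V E p \<and> hd p = x \<and> last p = y \<and> length p = Suc n)"

definition gpath :: "'a set \<Rightarrow> ('a \<Rightarrow> 'a \<Rightarrow> bool) \<Rightarrow> 'a list \<Rightarrow> bool" where
  "gpath V E p \<longleftrightarrow> walk V E p \<and> distinct p"

definition induced_path :: "'a set \<Rightarrow> ('a \<Rightarrow> 'a \<Rightarrow> bool) \<Rightarrow> 'a list \<Rightarrow> bool" where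
  "induced_path V E p \<longleftrightarrow> gpath V E p \<and>
     (\<forall>i j. i < length p \<and> j < length p \<and> Suc i < j \<longrightarrow> \<not> E (p ! i) (p ! j))"

definition shortest_path :: "'a set \<Rightarrow> ('a \<Rightarrow> 'a \<Rightarrow> bool) \<Rightarrow> 'a list \<Rightarrow> bool" where
  "shortest_path V E p \<longleftrightarrow> gpath V E p \<and> length p - 1 = gdist V E (hd p) (last p)"

definition distance_hereditary :: "'a set \<Rightarrow> ('a \<Rightarrow> 'a \<Rightarrow> bool) \<Rightarrow> bool" where
  "distance_hereditary V E \<longleftrightarrow> (\<forall>p. induced_path V E p \<longrightarrow> shortest_path V E p)"

definition induced_cycle :: "'a set \<Rightarrow> ('a \<Rightarrow> 'a \<Rightarrow> bool) \<Rightarrow> 'a list \<Rightarrow> bool" where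
  "induced_cycle V E c \<longleftrightarrow> length c \<ge> 3 \<and> distinct c \<and> set c \<subseteq> V \<and>
     (\<forall>i < length c. E (c ! i) (c ! (Suc i mod length c))) \<and>
     (\<forall>i < length c. \<forall>j < length c. E (c ! i) (c ! j) \<longrightarrow>
         j = Suc i mod length c \<or> i = Suc j mod length c)"

definition chordal :: "'a set \<Rightarrow> ('a \<Rightarrow> 'a \<Rightarrow> bool) \<Rightarrow> bool" where
  "chordal V E \<longleftrightarrow> \<not> (\<exists>c. induced_cycle V E c \<and> length c \<ge> 4)"

definition ptolemaic :: "'a set \<Rightarrow> ('a \<Rightarrow> 'a \<Rightarrow> bool) \<Rightarrow> bool" where
  "ptolemaic V E \<longleftrightarrow> (\<forall>x\<in>V. \<forall>y\<in>V. \<forall>z\<in>V. \<forall>w\<in>V.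
     gdist V E x y * gdist V E z w + gdist V E y z * gdist V E x w \<ge> gdist V E x z * gdist V E y w)"

end

theory Submission
  imports Defs
begin

lemma walk_single: "a \<in> V \<Longrightarrow> walk V E [a]" by (simp add: walk_def)

lemma walk_Cons:
  assumes "walk V E p" "E a (hd p)" "a \<in> V"
  shows "walk V E (a # p)"
proof -
  have ne: "p \<noteq> []" using assms(1) by (simp add: walk_def)
  show ?thesis unfolding walk_def
  proof (intro conjI allI impI)
    show "a # p \<noteq> []" by simp
    show "set (a # p) \<subseteq> V" using assms by (simp add: walk_def)
    fix i assume i: "Suc i < length (a # p)"
    show "E ((a # p) ! i) ((a # p) ! Suc i)"
    proof (cases i)
      case 0 then show ?thesis using assms(2) ne by (simp add: hd_conv_nth)
    next
      case (Suc j) then show ?thesis using assms(1) i by (simp add: walk_def)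
    qed
  qed
qed

lemma walk_ConsD:
  assumes "walk V E (a # p)" "p \<noteq> []"
  shows "walk V E p" "E a (hd p)" "a \<in> V"
proof -
  show "walk V E p" unfolding walk_def
  proof (intro conjI allI impI)
    show "p \<noteq> []" by fact
    show "set p \<subseteq> V" using assms(1) by (simp add: walk_def)
    fix i assume "Suc i < length p"
    then have "Suc (Suc i) < length (a # p)" by simp
    then have "E ((a#p) ! Suc i) ((a#p) ! Suc (Suc i))" using assms(1) unfolding walk_def by blast
    then show "E (p ! i) (p ! Suc i)" by simp
  qed
  have "Suc 0 < length (a # p)" using assms(2) by simp
  then have "E ((a#p) ! 0) ((a#p) ! Suc 0)" using assms(1) unfolding walk_def by blast
  then show "E a (hd p)" using assms(2) by (simp add: hd_conv_nth)
  show "a \<in> V" using assms(1) by (simp add: walk_def)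
qed

lemma walk_append:
  "walk V E p \<Longrightarrow> walk V E q \<Longrightarrow> last p = hd q \<Longrightarrow> walk V E (p @ tl q)"
proof (induction p)
  case Nil then show ?case by (simp add: walk_def)
next
  case (Cons a p)
  show ?case
  proof (cases "p = []")
    case True
    then have "a = hd q" using Cons by simp
    moreover have "q \<noteq> []" using Cons.prems by (simp add: walk_def)
    ultimately have "a # tl q = q" by simp
    then show ?thesis using True Cons.prems by simp
  next
    case False
    with Cons.prems walk_ConsD have w: "walk V E p" "E a (hd p)" "a \<in> V" by auto
    have "walk V E (p @ tl q)" using Cons.IH w Cons.prems False by simp
    moreover have "hd (p @ tl q) = hd p" using False by simp
    ultimately show ?thesis using walk_Cons[of V E "p @ tl q" a] w by simp
  qed
qed

lemma walk_rev:
  assumes "walk V E p" "\<And>a b. E a b \<Longrightarrow> E b a"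
  shows "walk V E (rev p)"
  unfolding walk_def
proof (intro conjI allI impI)
  show "rev p \<noteq> []" "set (rev p) \<subseteq> V" using assms(1) by (auto simp: walk_def)
  fix i assume i: "Suc i < length (rev p)"
  define n where "n = length p"
  define k where "k = n - Suc (Suc i)"
  have kk: "Suc k = n - Suc i" "Suc k < n" using i by (auto simp: n_def k_def)
  have "E (p ! k) (p ! Suc k)" using assms(1) kk(2) unfolding walk_def n_def by blast
  then have "E (p ! Suc k) (p ! k)" using assms(2) by blast
  moreover have "rev p ! i = p ! (n - Suc i)" "rev p ! Suc i = p ! k"
    using i by (auto simp: rev_nth n_def k_def)
  ultimately show "E (rev p ! i) (rev p ! Suc i)" using kk by simp
qed

lemma walk_mono:
  assumes "walk V' E' p" "V' \<subseteq> V" "\<And>a b. E' a b \<Longrightarrow> E a b"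
  shows "walk V E p"
  using assms unfolding walk_def by blast

locale cg =
  fixes V :: "'a set" and E :: "'a \<Rightarrow> 'a \<Rightarrow> bool"
  assumes sg: "simple_graph V E" and conn: "connected_graph V E"
begin

abbreviation "d \<equiv> gdist V E"

lemma finV: "finite V" using sg by (simp add: simple_graph_def)
lemma Ein1: "E a b \<Longrightarrow> a \<in> V" using sg by (simp add: simple_graph_def)
lemma Ein2: "E a b \<Longrightarrow> b \<in> V" using sg by (simp add: simple_graph_def)
lemma Esym: "E a b \<Longrightarrow> E b a" using sg by (simp add: simple_graph_def)
lemma Eirr: "\<not> E a a" using sg by (simp add: simple_graph_def)
lemma Ene: "E a b \<Longrightarrow> a \<noteq> b" using Eirr by blast

lemma d_sym: "d a b = d b a"
proof -
  have *: "\<And>a b n. (\<exists>p. walk V E p \<and> hd p = a \<and> last p = b \<and> length p = Suc n) \<Longrightarrow>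
        (\<exists>p. walk V E p \<and> hd p = b \<and> last p = a \<and> length p = Suc n)"
  proof -
    fix a b n assume "\<exists>p. walk V E p \<and> hd p = a \<and> last p = b \<and> length p = Suc n"
    then obtain p where p: "walk V E p" "hd p = a" "last p = b" "length p = Suc n" by blast
    have ne: "p \<noteq> []" using p by auto
    have "walk V E (rev p)" using walk_rev[OF p(1)] Esym by blast
    then show "\<exists>p. walk V E p \<and> hd p = b \<and> last p = a \<and> length p = Suc n"
      using p ne by (intro exI[of _ "rev p"]) (auto simp: hd_rev last_rev)
  qed
  have "(\<lambda>n. \<exists>p. walk V E p \<and> hd p = a \<and> last p = b \<and> length p = Suc n)
      = (\<lambda>n. \<exists>p. walk V E p \<and> hd p = b \<and> last p = a \<and> length p = Suc n)"
    using * by (intro ext iffI) blast+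
  then show ?thesis unfolding gdist_def by simp
qed

lemma walk_exists: "a \<in> V \<Longrightarrow> b \<in> V \<Longrightarrow> \<exists>p. walk V E p \<and> hd p = a \<and> last p = b"
  using conn by (auto simp: connected_graph_def)

lemma d_le: assumes "walk V E p" "hd p = a" "last p = b" shows "d a b \<le> length p - 1"
proof -
  have "p \<noteq> []" using assms by (simp add: walk_def)
  then have "length p = Suc (length p - 1)" by simp
  then show ?thesis unfolding gdist_def using assms by (intro Least_le) blast
qed

lemma d_ex: assumes "a \<in> V" "b \<in> V"
  shows "\<exists>p. walk V E p \<and> hd p = a \<and> last p = b \<and> length p = Suc (d a b)"
proof -
  obtain p where p: "walk V E p" "hd p = a" "last p = b" using walk_exists assms by blast
  have "p \<noteq> []" using p by (simp add: walk_def)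
  then have "length p = Suc (length p - 1)" by simp
  then have "\<exists>n p. walk V E p \<and> hd p = a \<and> last p = b \<and> length p = Suc n" using p by blast
  then show ?thesis unfolding gdist_def by (rule LeastI_ex)
qed

lemma d_refl: "a \<in> V \<Longrightarrow> d a a = 0"
  using d_le[of "[a]" a a] walk_single[of a V E] by simp

lemma d_zero: assumes "a \<in> V" "b \<in> V" "d a b = 0" shows "a = b"
proof -
  obtain p where p: "walk V E p" "hd p = a" "last p = b" "length p = Suc (d a b)" using d_ex assms by blast
  then obtain c where "p = [c]" using assms(3) by (auto simp: length_Suc_conv)
  then show ?thesis using p by simp
qed

lemma d_tri: assumes "a \<in> V" "b \<in> V" "c \<in> V" shows "d a c \<le> d a b + d b c"
proof -
  obtain p where p: "walk V E p" "hd p = a" "last p = b" "length p = Suc (d a b)" using d_ex assms by blast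
  obtain q where q: "walk V E q" "hd q = b" "last q = c" "length q = Suc (d b c)" using d_ex assms by blast
  have w: "walk V E (p @ tl q)" using walk_append[OF p(1) q(1)] p(3) q(2) by simp
  have ne: "p \<noteq> []" "q \<noteq> []" using p q by auto
  have h: "hd (p @ tl q) = a" using p ne by simp
  have l: "last (p @ tl q) = c"
  proof (cases "tl q = []")
    case True
    then have "q = [b]" using q ne by (cases q) auto
    then show ?thesis using True p q by simp
  next
    case False
    then show ?thesis using q ne by (simp add: last_tl)
  qed
  have "d a c \<le> length (p @ tl q) - 1" using d_le[OF w h l] .
  also have "\<dots> = d a b + d b c" using p q by simp
  finally show ?thesis .
qed

lemma d_edge: assumes "E a b" shows "d a b = 1"
proof -
  have V: "a \<in> V" "b \<in> V" using assms Ein1 Ein2 by auto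
  have "walk V E [a, b]" using walk_Cons[OF walk_single[OF V(2)] _ V(1)] assms by simp
  then have "d a b \<le> 1" using d_le[of "[a,b]" a b] by simp
  moreover have "d a b \<noteq> 0" using d_zero V Ene[OF assms] by blast
  ultimately show ?thesis by simp
qed

lemma d_one: assumes "a \<in> V" "b \<in> V" "d a b = 1" shows "E a b"
proof -
  obtain p where p: "walk V E p" "hd p = a" "last p = b" "length p = Suc (d a b)" using d_ex assms by blast
  then obtain u v where uv: "p = [u, v]" using assms(3) by (auto simp: length_Suc_conv)
  have "E (p ! 0) (p ! Suc 0)" using p(1) uv unfolding walk_def by auto
  then show ?thesis using uv p by simp
qed

lemma d_parent: assumes "a \<in> V" "b \<in> V" "d a b = Suc k" shows "\<exists>n. E a n \<and> d n b = k"
proof -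
  obtain p where p: "walk V E p" "hd p = a" "last p = b" "length p = Suc (d a b)" using d_ex assms by blast
  then obtain p' where pp0: "p = a # p'" by (cases p) auto
  then have pp: "p = a # p'" "p' \<noteq> []" using p assms(3) by auto
  have w: "walk V E p'" "E a (hd p')" using walk_ConsD[of V E a p'] p pp by auto
  have "last p' = b" using p pp by simp
  then have le: "d (hd p') b \<le> k" using d_le[OF w(1) refl] p pp assms(3) by simp
  have hv: "hd p' \<in> V" using w Ein2 by blast
  have "Suc k \<le> d a (hd p') + d (hd p') b" using d_tri[OF assms(1) hv assms(2)] assms(3) by simp
  then have "d (hd p') b = k" using le d_edge[OF w(2)] by simp
  then show ?thesis using w by blast
qed

lemma d_adj: assumes "E a n" "b \<in> V" shows "d a b \<le> Suc (d n b)" "d n b \<le> Suc (d a b)"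
  using d_tri[of a n b] d_tri[of n a b] d_edge[OF assms(1)] d_edge[OF Esym[OF assms(1)]]
    Ein1[OF assms(1)] Ein2[OF assms(1)] assms(2) by auto

lemma d_two: assumes "a \<noteq> b" "\<not> E a b" "E a m" "E m b" shows "d a b = 2"
proof -
  have V: "a \<in> V" "b \<in> V" "m \<in> V" using assms Ein1 Ein2 by auto
  have "d a b \<le> 2" using d_tri[OF V(1) V(3) V(2)] d_edge assms by simp
  moreover have "d a b \<noteq> 0" using d_zero V assms(1) by blast
  moreover have "d a b \<noteq> 1" using d_one V assms(2) by blast
  ultimately show ?thesis by simp
qed

lemma d_pos: "a \<in> V \<Longrightarrow> b \<in> V \<Longrightarrow> a \<noteq> b \<Longrightarrow> d a b \<ge> 1"
  using d_zero by fastforce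

end

context cg
begin

definition Q where "Q x y z w \<longleftrightarrow> d x z * d y w \<le> d x y * d z w + d y z * d x w"
definition far where "far r v \<longleftrightarrow> v \<in> V \<and> (\<forall>s\<in>V. d r s \<le> d r v)"
definition par where "par r v n \<longleftrightarrow> E v n \<and> Suc (d r n) = d r v"
definition IHF where "IHF \<longleftrightarrow> (\<forall>r t. r \<in> V \<longrightarrow> far r t \<longrightarrow>
   (\<forall>x\<in>V-{t}. \<forall>y\<in>V-{t}. \<forall>z\<in>V-{t}. \<forall>w\<in>V-{t}. Q x y z w))"

lemma Q_rot: "Q x y z w \<longleftrightarrow> Q y z w x"
  unfolding Q_def by (metis d_sym add.commute mult.commute)

lemma Q_refl: "Q x y z w \<longleftrightarrow> Q x w z y"
  unfolding Q_def by (metis d_sym add.commute mult.commute)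

lemma par_ex: assumes "r \<in> V" "v \<in> V" "v \<noteq> r" shows "\<exists>n. par r v n"
proof -
  obtain k where k: "d v r = Suc k" using d_pos[OF assms(2,1)] assms(3) by (cases "d v r") auto
  obtain n where "E v n" "d n r = k" using d_parent[OF assms(2,1) k] by blast
  then show ?thesis using k by (auto simp: par_def d_sym)
qed

lemma parV: "par r v n \<Longrightarrow> v \<in> V \<and> n \<in> V" unfolding par_def using Ein1 Ein2 by blast

lemma far_ex: assumes "r \<in> V" shows "\<exists>t. far r t"
proof -
  have fin: "finite (d r ` V)" using finV by simp
  have ne: "d r ` V \<noteq> {}" using assms by auto
  obtain t where t: "t \<in> V" "d r t = Max (d r ` V)" using Max_in[OF fin ne] by auto
  have "\<forall>s\<in>V. d r s \<le> d r t" using t Max_ge[OF fin] by auto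
  then show ?thesis using t by (auto simp: far_def)
qed

end

locale cg2 = cg +
  assumes P2: "\<forall>x\<in>V. \<forall>y\<in>V. \<forall>z\<in>V. \<forall>w\<in>V. y \<noteq> z \<and> gdist V E x y + gdist V E y z = gdist V E x z \<and> gdist V E y z + gdist V E z w = gdist V E y w \<longrightarrow> gdist V E x y + gdist V E y z + gdist V E z w = gdist V E x w"
begin

lemma P2D: "x\<in>V \<Longrightarrow> y\<in>V \<Longrightarrow> z\<in>V \<Longrightarrow> w\<in>V \<Longrightarrow> y \<noteq> z \<Longrightarrow> d x y + d y z = d x z \<Longrightarrow> d y z + d z w = d y w \<Longrightarrow> d x y + d y z + d z w = d x w"
  using P2 by blast

lemma T1: assumes "par r v n1" "par r v n2" "n1 \<noteq> n2" "r \<in> V" shows "E n1 n2"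
proof (rule ccontr)
  assume ne: "\<not> E n1 n2"
  have V: "v \<in> V" "n1 \<in> V" "n2 \<in> V" using assms parV by auto
  have e: "E v n1" "E v n2" "Suc (d r n1) = d r v" "Suc (d r n2) = d r v" using assms by (auto simp: par_def)
  have "d n1 n2 = 2" using d_two[OF assms(3) ne Esym[OF e(1)] e(2)] .
  moreover have o: "d n1 v = 1" "d v n2 = 1" using d_edge e Esym by auto
  moreover have "n1 \<noteq> v" using Ene e by auto
  ultimately have "d r n1 + d n1 v + d v n2 = d r n2"
    using P2D[OF assms(4) V(2) V(1) V(3)] e by simp
  then show False using e o by simp
qed

lemma T2: assumes "E u v" "d r u = d r v" "par r u n" "r \<in> V" shows "E n v"
proof (rule ccontr)
  assume ne: "\<not> E n v"
  have e: "E u n" "Suc (d r n) = d r u" using assms by (auto simp: par_def)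
  have V: "u \<in> V" "v \<in> V" "n \<in> V" using assms e Ein1 Ein2 by auto
  have nv: "n \<noteq> v" using e assms(2) by auto
  have "d n v = 2" using d_two[OF nv ne Esym[OF e(1)] assms(1)] .
  moreover have o: "d n u = 1" "d u v = 1" using d_edge e assms Esym by auto
  moreover have "n \<noteq> u" using Ene e by auto
  ultimately have "d r n + d n u + d u v = d r v"
    using P2D[OF assms(4) V(3) V(1) V(2)] e by simp
  then show False using e assms(2) o by simp
qed

lemma T3: assumes "par u v n1" "par w v n2" "n1 \<noteq> n2" "\<not> E n1 n2" "u \<in> V" "w \<in> V"
  shows "d u w = d u v + d v w"
proof -
  have e: "E v n1" "E v n2" "Suc (d u n1) = d u v" "Suc (d w n2) = d w v" using assms by (auto simp: par_def)
  have V: "v \<in> V" "n1 \<in> V" "n2 \<in> V" using assms parV by auto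
  have "d n1 n2 = 2" using d_two[OF assms(3,4) Esym[OF e(1)] e(2)] .
  moreover have "d n1 v = 1" "d v n2 = 1" using d_edge e Esym by auto
  moreover have "n1 \<noteq> v" using Ene e by auto
  ultimately have 1: "d u n1 + d n1 v + d v n2 = d u n2"
    using P2D[OF assms(5) V(2) V(1) V(3)] e by simp
  have "v \<noteq> n2" using Ene e by auto
  moreover have "d u v + d v n2 = d u n2" using 1 e \<open>d n1 v = 1\<close> \<open>d v n2 = 1\<close> by simp
  moreover have "d v n2 + d n2 w = d v w" using e \<open>d v n2 = 1\<close> by (simp add: d_sym)
  ultimately have "d u v + d v n2 + d n2 w = d u w" using P2D[OF assms(5) V(1) V(3) assms(6)] by blast
  then show ?thesis using e \<open>d v n2 = 1\<close> by (simp add: d_sym)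
qed

lemma K: assumes "far r v" "par r v n" "t \<in> V" "t \<noteq> v" "r \<in> V" shows "d n t \<le> d v t"
proof -
  have V: "v \<in> V" "n \<in> V" using assms parV by auto
  obtain k where k: "d v t = Suc k" using d_pos[OF V(1) assms(3)] assms(4) by (cases "d v t") auto
  obtain n1 where n1: "E v n1" "d n1 t = k" using d_parent[OF V(1) assms(3) k] by blast
  have n1V: "n1 \<in> V" using n1 Ein2 by auto
  have "n = n1 \<or> E n n1"
  proof (cases "n = n1")
    case False
    have "d r n1 \<le> d r v" using assms(1) n1V by (auto simp: far_def)
    moreover have "d r v \<le> Suc (d r n1)" using d_adj(2)[OF Esym[OF n1(1)], of r] assms(5) by (simp add: d_sym)
    ultimately have "Suc (d r n1) = d r v \<or> d r n1 = d r v" by auto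
    then show ?thesis
    proof
      assume "Suc (d r n1) = d r v"
      then have "par r v n1" using n1 by (simp add: par_def)
      then show ?thesis using T1[OF assms(2) _ False assms(5)] by blast
    next
      assume "d r n1 = d r v"
      then show ?thesis using T2[OF n1(1) _ assms(2) assms(5)] by simp
    qed
  qed simp
  then show ?thesis
  proof
    assume "n = n1" then show ?thesis using n1 k by simp
  next
    assume "E n n1" then show ?thesis using d_adj(1)[OF _ assms(3)] n1 k by fastforce
  qed
qed

lemma rem_nb: assumes "far r t" "r \<noteq> t" "r \<in> V" "E t a" "E t b" "a \<noteq> b" "\<not> E a b"
  shows "\<exists>s. s \<noteq> t \<and> E a s \<and> E s b"
proof -
  have tV: "t \<in> V" using assms Ein1 by auto
  have aV: "a \<in> V" "b \<in> V" using assms Ein2 by auto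
  have da: "d r a \<le> d r t" "d r b \<le> d r t" using assms(1) aV by (auto simp: far_def)
  have da2: "d r t \<le> Suc (d r a)" "d r t \<le> Suc (d r b)"
    using d_adj(2)[OF Esym[OF assms(4)], of r] d_adj(2)[OF Esym[OF assms(5)], of r] assms(3)
    by (auto simp: d_sym)
  obtain s where s: "par r t s" using par_ex[OF assms(3) tV] assms(2) by auto
  have st: "s \<noteq> t" using s Ene by (auto simp: par_def)
  show ?thesis
  proof (cases "Suc (d r a) = d r t")
    case A: True
    then have pa: "par r t a" using assms(4) by (simp add: par_def)
    show ?thesis
    proof (cases "Suc (d r b) = d r t")
      case True
      then have "par r t b" using assms(5) by (simp add: par_def)
      then have "E a b" using T1[OF pa _ assms(6) assms(3)] by blast
      then show ?thesis using assms(7) by blast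
    next
      case False
      then have "d r t = d r b" using da da2 by auto
      then have "E a b" using T2[OF assms(5) _ pa assms(3)] by blast
      then show ?thesis using assms(7) by blast
    qed
  next
    case A: False
    then have ea: "d r t = d r a" using da da2 by auto
    show ?thesis
    proof (cases "Suc (d r b) = d r t")
      case True
      then have "par r t b" using assms(5) by (simp add: par_def)
      then have "E b a" using T2[OF assms(4) ea] assms(3) by blast
      then show ?thesis using assms(7) Esym by blast
    next
      case False
      then have eb: "d r t = d r b" using da da2 by auto
      have "E s a" using T2[OF assms(4) ea s assms(3)] .
      moreover have "E s b" using T2[OF assms(5) eb s assms(3)] .
      ultimately show ?thesis using st Esym by blast
    qed
  qed
qed

end

context cg2
begin

lemma inI_par: assumes "x \<in> V" "z \<in> V" "d x v + d v z = d x z" "par z v u"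
  shows "d x u + d u z = d x z" "d x u = Suc (d x v)"
proof -
  have e: "E v u" "Suc (d z u) = d z v" using assms by (auto simp: par_def)
  have V: "v \<in> V" "u \<in> V" using e Ein1 Ein2 by auto
  have "d x u \<le> Suc (d x v)" using d_adj(1)[OF Esym[OF e(1)] assms(1)] by (simp add: d_sym)
  moreover have "d x z \<le> d x u + d u z" using d_tri assms V by blast
  ultimately show "d x u = Suc (d x v)" "d x u + d u z = d x z" using assms(3) e
    by (simp_all add: d_sym[of z])
qed

lemma claimS:
  assumes "x \<in> V" "z \<in> V" "v \<in> V" "v' \<in> V" "d x v + d v z = d x z" "d x v' + d v' z = d x z"
    "d x v = d x v'"
  shows "v = v' \<or> E v v'"
  using assms
proof (induction "d v z" arbitrary: v v' rule: less_induct)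
  case less
  show ?case
  proof (cases "v = z")
    case True
    then have "d v' z = 0" using less.prems d_refl by simp
    then show ?thesis using d_zero less.prems True by blast
  next
    case False
    have "v' \<noteq> z"
    proof
      assume "v' = z"
      then have "d v z = 0" using less.prems d_refl by simp
      then show False using d_zero less.prems False by blast
    qed
    obtain u where u: "par z v u" using par_ex less.prems False by blast
    obtain u' where u': "par z v' u'" using par_ex less.prems \<open>v' \<noteq> z\<close> by blast
    have uu: "d x u + d u z = d x z" "d x u = Suc (d x v)" using inI_par[OF less.prems(1,2,5) u] by auto
    have uu': "d x u' + d u' z = d x z" "d x u' = Suc (d x v')" using inI_par[OF less.prems(1,2,6) u'] by auto
    have Vu: "u \<in> V" "u' \<in> V" using u u' parV by auto
    have lt: "d u z < d v z" using u by (auto simp: par_def d_sym)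
    have "u = u' \<or> E u u'" using less.hyps[OF lt less.prems(1,2) Vu uu(1) uu'(1)] uu uu' less.prems(7) by simp
    have pu: "par x u v" using u uu by (auto simp: par_def intro: Esym)
    have pu': "par x u' v'" using u' uu' by (auto simp: par_def intro: Esym)
    show ?thesis
    proof (cases "v = v'")
      case True then show ?thesis by simp
    next
      case ne: False
      from \<open>u = u' \<or> E u u'\<close> show ?thesis
      proof
        assume "u = u'"
        then show ?thesis using T1[OF pu _ ne less.prems(1)] pu' by simp
      next
        assume "E u u'"
        then have "E v u'" using T2[OF _ _ pu less.prems(1)] uu uu' less.prems(7) by simp
        then have "par x u' v" using uu uu' less.prems(7) by (auto simp: par_def intro: Esym)
        then show ?thesis using T1[OF _ pu' ne less.prems(1)] by simp
      qed
    qed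
  qed
qed

lemma claimI:
  assumes "x \<in> V" "z \<in> V" "v \<in> V" "m \<in> V" "d x v + d v z = d x z" "d x m + d m z = d x z"
    "d x v < d x m"
  shows "d v m \<le> d x m - d x v"
  using assms
proof (induction "d x m" arbitrary: m rule: less_induct)
  case less
  have vz: "v \<noteq> z"
  proof
    assume "v = z"
    then have "d x m \<le> d x v" using less.prems d_refl by simp
    then show False using less.prems by simp
  qed
  show ?case
  proof (cases "Suc (d x v) = d x m")
    case True
    obtain u where u: "par z v u" using par_ex less.prems vz by blast
    have uu: "d x u + d u z = d x z" "d x u = Suc (d x v)" using inI_par[OF less.prems(1,2,5) u] by auto
    have Vu: "u \<in> V" using u parV by auto
    have "u = m \<or> E u m" using claimS[OF less.prems(1,2) Vu less.prems(4) uu(1) less.prems(6)] uu True by simp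
    have pu: "par x u v" using u uu by (auto simp: par_def intro: Esym)
    have "E v m"
      using \<open>u = m \<or> E u m\<close>
    proof
      assume "u = m" then show ?thesis using u by (auto simp: par_def)
    next
      assume "E u m" then show ?thesis using T2[OF _ _ pu less.prems(1)] uu True by simp
    qed
    then show ?thesis using d_edge True by simp
  next
    case False
    have mx: "m \<noteq> x" using less.prems by auto
    obtain m' where m': "par x m m'" using par_ex less.prems mx by blast
    have e: "E m m'" "Suc (d x m') = d x m" using m' by (auto simp: par_def)
    have Vm': "m' \<in> V" using e Ein2 by auto
    have "d m' z \<le> Suc (d m z)" using d_adj(1)[OF Esym[OF e(1)] less.prems(2)] .
    moreover have "d x z \<le> d x m' + d m' z" using d_tri less.prems Vm' by blast
    ultimately have i: "d x m' + d m' z = d x z" using less.prems(6) e by simp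
    have lt: "d x m' < d x m" "d x v < d x m'" using e False less.prems(7) by auto
    have "d v m' \<le> d x m' - d x v" using less.hyps[OF lt(1) less.prems(1,2,3) Vm' less.prems(5) i lt(2)] .
    moreover have "d v m \<le> Suc (d v m')" using d_adj(2)[OF Esym[OF e(1)] less.prems(3)] by (simp add: d_sym)
    ultimately show ?thesis using e lt by simp
  qed
qed

end

context cg2
begin

lemma remove_walk:
  assumes "far r t" "r \<noteq> t" "r \<in> V"
  shows "a \<in> V \<Longrightarrow> a \<noteq> t \<Longrightarrow> b \<in> V \<Longrightarrow> b \<noteq> t \<Longrightarrow>
    \<exists>p. walk (V - {t}) (\<lambda>u v. E u v \<and> u \<noteq> t \<and> v \<noteq> t) p \<and> hd p = a \<and> last p = b \<and> length p \<le> Suc (d a b)"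
proof (induction "d a b" arbitrary: a rule: less_induct)
  case less
  let ?V = "V - {t}" and ?E = "\<lambda>u v. E u v \<and> u \<noteq> t \<and> v \<noteq> t"
  show ?case
  proof (cases "a = b")
    case True
    then show ?thesis using less.prems by (intro exI[of _ "[a]"]) (simp add: walk_def)
  next
    case False
    then obtain k where k: "d a b = Suc k" using d_pos less.prems by (cases "d a b") fastforce+
    obtain n where n: "E a n" "d n b = k" using d_parent[OF less.prems(1,3) k] by blast
    have nV: "n \<in> V" using n Ein2 by auto
    show ?thesis
    proof (cases "n = t")
      case False
      obtain p where p: "walk ?V ?E p" "hd p = n" "last p = b" "length p \<le> Suc (d n b)"
        using less.hyps[of n] k n nV False less.prems by auto
      have "walk ?V ?E (a # p)" using walk_Cons[OF p(1)] p(2) n(1) False less.prems by simp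
      moreover have "p \<noteq> []" using p by (simp add: walk_def)
      ultimately show ?thesis using p k n by (intro exI[of _ "a # p"]) auto
    next
      case True
      have tV: "t \<in> V" using assms by (simp add: far_def)
      obtain k' where k': "d t b = Suc k'" using d_pos[OF tV less.prems(3)] less.prems(4) n True
        by (cases "d t b") auto
      obtain n2 where n2: "E t n2" "d n2 b = k'" using d_parent[OF tV less.prems(3) k'] by blast
      have an2: "a \<noteq> n2" using k k' n n2 True by auto
      have nE: "\<not> E a n2"
      proof
        assume "E a n2"
        then have "d a b \<le> Suc (d n2 b)" using d_adj(1) less.prems by blast
        then show False using k k' n n2 True by simp
      qed
      obtain s where s: "s \<noteq> t" "E a s" "E s n2"
        using rem_nb[OF assms(1,2,3) _ n2(1) an2 nE] n True Esym by blast
      have sV: "s \<in> V" using s Ein2 by auto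
      have ds: "d s b \<le> Suc k'" using d_adj(1)[OF s(3) less.prems(3)] n2 by simp
      obtain p where p: "walk ?V ?E p" "hd p = s" "last p = b" "length p \<le> Suc (d s b)"
        using less.hyps[of s] k k' n True ds sV s less.prems by auto
      have "walk ?V ?E (a # p)" using walk_Cons[OF p(1)] p(2) s less.prems by simp
      moreover have "p \<noteq> []" using p by (simp add: walk_def)
      ultimately show ?thesis using p k n ds k' True by (intro exI[of _ "a # p"]) auto
    qed
  qed
qed

lemma remove_cg:
  assumes "far r t" "r \<noteq> t" "r \<in> V"
  shows "cg (V - {t}) (\<lambda>u v. E u v \<and> u \<noteq> t \<and> v \<noteq> t)"
proof
  show "simple_graph (V - {t}) (\<lambda>u v. E u v \<and> u \<noteq> t \<and> v \<noteq> t)"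
    using sg by (auto simp: simple_graph_def)
  show "connected_graph (V - {t}) (\<lambda>u v. E u v \<and> u \<noteq> t \<and> v \<noteq> t)"
    unfolding connected_graph_def using remove_walk[OF assms] by blast
qed

lemma remove_d:
  assumes "far r t" "r \<noteq> t" "r \<in> V" "a \<in> V - {t}" "b \<in> V - {t}"
  shows "gdist (V - {t}) (\<lambda>u v. E u v \<and> u \<noteq> t \<and> v \<noteq> t) a b = d a b"
proof -
  interpret G: cg "V - {t}" "\<lambda>u v. E u v \<and> u \<noteq> t \<and> v \<noteq> t" using remove_cg[OF assms(1-3)] .
  obtain p where p: "walk (V - {t}) (\<lambda>u v. E u v \<and> u \<noteq> t \<and> v \<noteq> t) p" "hd p = a" "last p = b" "length p \<le> Suc (d a b)"
    using remove_walk[OF assms(1-3)] assms by blast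
  have 1: "gdist (V - {t}) (\<lambda>u v. E u v \<and> u \<noteq> t \<and> v \<noteq> t) a b \<le> d a b" using G.d_le[OF p(1-3)] p(4) by simp
  obtain q where q: "walk (V - {t}) (\<lambda>u v. E u v \<and> u \<noteq> t \<and> v \<noteq> t) q" "hd q = a" "last q = b"
    "length q = Suc (gdist (V - {t}) (\<lambda>u v. E u v \<and> u \<noteq> t \<and> v \<noteq> t) a b)"
    using G.d_ex assms by blast
  have "walk V E q" using walk_mono[OF q(1)] by blast
  then have "d a b \<le> gdist (V - {t}) (\<lambda>u v. E u v \<and> u \<noteq> t \<and> v \<noteq> t) a b" using d_le q by fastforce
  then show ?thesis using 1 by simp
qed

lemma remove_cg2:
  assumes "far r t" "r \<noteq> t" "r \<in> V"
  shows "cg2 (V - {t}) (\<lambda>u v. E u v \<and> u \<noteq> t \<and> v \<noteq> t)"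
proof -
  interpret G: cg "V - {t}" "\<lambda>u v. E u v \<and> u \<noteq> t \<and> v \<noteq> t" using remove_cg[OF assms(1-3)] .
  show ?thesis
    by unfold_locales (use P2 remove_d[OF assms] in auto)
qed

end

context cg2
begin

lemma IHFD: assumes "IHF" "r \<in> V" "far r t" "x\<in>V" "y\<in>V" "z\<in>V" "w\<in>V" "x\<noteq>t" "y\<noteq>t" "z\<noteq>t" "w\<noteq>t"
  shows "Q x y z w"
  using assms unfolding IHF_def by blast

lemma lemA:
  assumes IH: IHF and V: "x\<in>V" "y\<in>V" "z\<in>V" "w\<in>V"
    and dist: "x\<noteq>y" "x\<noteq>z" "x\<noteq>w" "y\<noteq>z" "y\<noteq>w" "z\<noteq>w"
    and p2: "2 \<le> d x z" and fz: "far y z"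
  shows "Q x y z w"
proof -
  have Qe: "Q x y z w \<longleftrightarrow> d x z * d y w \<le> d x y * d z w + d y z * d x w" by (simp add: Q_def)
  have tri1: "d y w \<le> d x y + d x w" using d_tri[of y x w] V by (simp add: d_sym)
  have tri2: "d x z \<le> d x w + d z w" using d_tri[of x w z] V by (simp add: d_sym)
  have IHn: "Q x y n w" if pn: "par y z n" for n
  proof -
    have "n \<in> V" "n \<noteq> z" using pn parV Ene by (auto simp: par_def)
    then show "Q x y n w" using IHFD[OF IH V(2) fz V(1,2) _ V(4)] dist by auto
  qed
  have Kn: "d x n \<le> d x z \<and> d x z \<le> Suc (d x n) \<and> d n w \<le> d z w \<and> d z w \<le> Suc (d n w) \<and> Suc (d y n) = d y z"
    if pn: "par y z n" for n
  proof -
    have e: "E z n" "Suc (d y n) = d y z" using pn by (auto simp: par_def)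
    have "d n x \<le> d z x" using K[OF fz pn V(1)] dist V by auto
    moreover have "d n w \<le> d z w" using K[OF fz pn V(4)] dist V by auto
    moreover have "d z x \<le> Suc (d n x)" "d z w \<le> Suc (d n w)" using d_adj(1)[OF e(1)] V by auto
    ultimately show ?thesis using e by (simp add: d_sym)
  qed
  obtain n0 where n0: "par y z n0" using par_ex[OF V(2,3)] dist by auto
  show ?thesis
  proof (cases "\<exists>n. par y z n \<and> (d x n = d x z \<or> Suc (d n w) = d z w)")
    case True
    then obtain n where n: "par y z n" "d x n = d x z \<or> Suc (d n w) = d z w" by blast
    have Qn: "d x n * d y w \<le> d x y * d n w + d y n * d x w" using IHn[OF n(1)] by (simp add: Q_def)
    have k: "d x n \<le> d x z" "d x z \<le> Suc (d x n)" "d n w \<le> d z w" "d z w \<le> Suc (d n w)" "Suc (d y n) = d y z"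
      using Kn[OF n(1)] by auto
    from n(2) show ?thesis
    proof
      assume h: "d x n = d x z"
      have "d x y * d n w \<le> d x y * d z w" using k by (simp add: mult_le_mono2)
      moreover have "d y n * d x w \<le> d y z * d x w" using k(5) by (intro mult_le_mono1) simp
      moreover have "d x z * d y w \<le> d x y * d n w + d y n * d x w" using Qn h by simp
      ultimately show ?thesis using Qe by linarith
    next
      assume h: "Suc (d n w) = d z w"
      have "d x z * d y w \<le> Suc (d x n) * d y w" using k(2) by (rule mult_le_mono1)
      moreover have "Suc (d x n) * d y w = d x n * d y w + d y w" by simp
      moreover have "d x y * d z w = d x y * d n w + d x y" using h by (metis mult_Suc_right add.commute)
      moreover have "d y z * d x w = d y n * d x w + d x w" using k(5) by (metis mult_Suc add.commute)
      ultimately show ?thesis using Qn tri1 Qe by linarith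
    qed
  next
    case False
    have n0f: "Suc (d x n0) = d x z" "d n0 w = d z w" using Kn[OF n0] False n0 by (auto simp: le_Suc_eq)
    have en0: "E z n0" "Suc (d y n0) = d y z" using n0 by (auto simp: par_def)
    have n0V: "n0 \<in> V" using en0 Ein2 by auto
    obtain m where m: "par w z m" using par_ex[OF V(4,3)] dist by auto
    have em: "E z m" "Suc (d w m) = d w z" using m by (auto simp: par_def)
    have mV: "m \<in> V" using em Ein2 by auto
    have mn0: "m \<noteq> n0" using em n0f by (auto simp: d_sym)
    have qle: "d y w \<le> d y n0 + d n0 w" using d_tri V n0V by blast
    have En0m: "E n0 m"
    proof (rule ccontr)
      assume "\<not> E n0 m"
      then have "d y w = d y z + d z w" using T3[OF n0 m mn0[symmetric]] V by blast
      then show False using qle en0 n0f by simp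
    qed
    have dym: "d y m = d y z"
    proof -
      have "d y m \<le> Suc (d y n0)" using d_adj(2)[OF En0m V(2)] by (simp add: d_sym)
      moreover have "d y z \<le> Suc (d y m)" using d_adj(1)[OF em(1) V(2)] by (simp add: d_sym)
      moreover have "Suc (d y m) \<noteq> d y z"
      proof
        assume "Suc (d y m) = d y z"
        then have "par y z m" using em by (simp add: par_def)
        then show False using False em by (auto simp: d_sym)
      qed
      ultimately show ?thesis using en0 by simp
    qed
    have fm: "far y m" using fz mV dym by (simp add: far_def)
    have my: "m \<noteq> y" using dym d_refl d_zero V dist by auto
    have mz: "m \<noteq> z" using em Ene by auto
    show ?thesis
    proof (cases "m = x \<or> m = w")
      case False
      then show ?thesis using IHFD[OF IH V(2) fm V] my mz by auto
    next
      case True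
      have "m \<noteq> x"
      proof
        assume "m = x"
        then have "d x z = 1" using em d_edge Esym by (simp add: d_sym)
        then show False using p2 by simp
      qed
      then have mw: "m = w" using True by simp
      have c1: "d z w = 1" using em mw d_edge by simp
      have qb: "d y w = d y z" using dym mw by simp
      show ?thesis
      proof (cases "d x z \<le> d x w")
        case True
        have "d x z * d y w \<le> d x w * d y z" using True qb by (simp add: mult_le_mono1)
        then show ?thesis using Qe by (simp add: mult.commute)
      next
        case False
        then have pe: "d x z = Suc (d x w)" using tri2 c1 by simp
        have p1: "par x z n0" using en0 n0f by (simp add: par_def)
        have p2': "par x z w" using em mw pe by (simp add: par_def)
        have n0w: "n0 \<noteq> w" using en0 qb by auto
        have En0w: "E n0 w" using T1[OF p1 p2' n0w V(1)] .
        obtain g where g: "par x w g" using par_ex[OF V(1,4)] dist by auto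
        have eg: "E w g" "Suc (d x g) = d x w" using g by (auto simp: par_def)
        have gV: "g \<in> V" using eg Ein2 by auto
        have Egn0: "E g n0" using T2[OF Esym[OF En0w] _ g V(1)] n0f pe by simp
        have gz: "g \<noteq> z" using eg pe by auto
        have nEgz: "\<not> E g z"
        proof
          assume "E g z"
          then have "d z x \<le> Suc (d g x)" using d_adj(2)[OF _ V(1)] by blast
          then have "d x z \<le> Suc (d x g)" by (simp add: d_sym)
          then show False using eg pe by simp
        qed
        have dyg: "d y g = d y z"
        proof -
          have "d y g \<le> Suc (d y n0)" using d_adj(1)[OF Egn0 V(2)] by (simp add: d_sym)
          moreover have "d y w \<le> Suc (d y g)" using d_adj(1)[OF eg(1) V(2)] by (simp add: d_sym)
          moreover have "Suc (d y g) \<noteq> d y z"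
          proof
            assume h: "Suc (d y g) = d y z"
            then have "par y w g" using eg qb by (simp add: par_def)
            then have "E g z" using T2[OF Esym[OF em(1)] _ _ V(2)] mw qb by simp
            then show False using nEgz by simp
          qed
          ultimately show ?thesis using en0 qb by simp
        qed
        have fg: "far y g" using fz gV dyg by (simp add: far_def)
        have gy: "g \<noteq> y" using dyg d_refl d_zero V dist by auto
        have gw: "g \<noteq> w" using eg Ene by auto
        show ?thesis
        proof (cases "g = x")
          case False
          then show ?thesis using IHFD[OF IH V(2) fg V] gy gz gw by auto
        next
          case True
          then have "d x y = d y z" using dyg by (simp add: d_sym)
          then show ?thesis using Qe c1 pe qb by (simp add: mult.commute)
        qed
      qed
    qed
  qed
qed

end

context cg2
begin

lemma corner:
  assumes IH: IHF and V: "x\<in>V" "y\<in>V" "z\<in>V" "w\<in>V"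
    and dist: "x\<noteq>y" "x\<noteq>z" "x\<noteq>w" "y\<noteq>z" "y\<noteq>w" "z\<noteq>w"
    and fz: "far x z" and uq: "\<And>t. far x t \<Longrightarrow> t = z"
    and ap: "d x y < d x z" and ep: "d x w < d x z"
  shows "Q x y z w \<or> (d y w + 1 = d y z + d z w \<and>
     (\<exists>s. E s z \<and> d s y + 1 = d y z \<and> d s x + 1 = d x z \<and> d s w = d z w) \<and>
     (\<exists>t. E t z \<and> d t w + 1 = d z w \<and> d t x + 1 = d x z \<and> d t y = d y z))"
proof -
  have sub: "par x z m" if pm: "par u z m" and uV: "u \<in> V" and uu: "d x u < d x z" for u m
  proof (rule ccontr)
    assume np: "\<not> par x z m"
    have em: "E z m" "Suc (d u m) = d u z" using pm by (auto simp: par_def)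
    have mV: "m \<in> V" using em Ein2 by auto
    obtain n where n: "par x z n" using par_ex[OF V(1,3)] dist by auto
    have nm: "n \<noteq> m" using np n by auto
    have Enm: "E n m"
    proof (rule ccontr)
      assume "\<not> E n m"
      then have "d x u = d x z + d z u" using T3[OF n pm nm _ V(1) uV] by blast
      then show False using uu by simp
    qed
    have "d x m \<le> Suc (d x n)" using d_adj(2)[OF Enm V(1)] by (simp add: d_sym)
    moreover have "d x z \<le> Suc (d x m)" using d_adj(1)[OF em(1) V(1)] by (simp add: d_sym)
    moreover have "Suc (d x n) = d x z" using n by (simp add: par_def)
    moreover have "Suc (d x m) \<noteq> d x z" using np em by (simp add: par_def)
    ultimately have "d x m = d x z" by simp
    then have "far x m" using fz mV by (simp add: far_def)
    then have "m = z" using uq by blast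
    then show False using em Ene by auto
  qed
  have Qeq: "Q x y z w \<longleftrightarrow> d x z * d y w \<le> d x y * d z w + d y z * d x w" by (simp add: Q_def)
  have tri1: "d y w \<le> d x y + d x w" using d_tri[of y x w] V by (simp add: d_sym)
  show ?thesis
  proof (cases "\<exists>n. par y z n \<and> par w z n")
    case True
    then obtain n where n: "par y z n" "par w z n" by blast
    have nx: "par x z n" using sub[OF n(1) V(2)] ap by (simp add: d_sym)
    have e: "E z n" "Suc (d y n) = d y z" "Suc (d w n) = d w z" "Suc (d x n) = d x z"
      using n nx by (auto simp: par_def)
    have nV: "n \<in> V" "n \<noteq> z" using e Ein2 Ene by auto
    have "Q x y n w" using IHFD[OF IH V(1) fz V(1,2) nV(1) V(4)] dist nV by auto
    then have Qn: "d x n * d y w \<le> d x y * d n w + d y n * d x w" by (simp add: Q_def)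
    have "d x z * d y w = d x n * d y w + d y w" using e(4) by (metis mult_Suc add.commute)
    moreover have "d x y * d z w = d x y * d n w + d x y" using e(3) by (metis mult_Suc_right add.commute d_sym)
    moreover have "d y z * d x w = d y n * d x w + d x w" using e(2) by (metis mult_Suc add.commute)
    ultimately have "Q x y z w" using Qn tri1 Qeq by linarith
    then show ?thesis by simp
  next
    case False
    obtain s where s: "par y z s" using par_ex[OF V(2,3)] dist by auto
    obtain t where t: "par w z t" using par_ex[OF V(4,3)] dist by auto
    have sx: "par x z s" using sub[OF s V(2)] ap by (simp add: d_sym)
    have tx: "par x z t" using sub[OF t V(4)] ep by (simp add: d_sym)
    have st: "s \<noteq> t" using False s t by auto
    have Est: "E s t" using T1[OF sx tx st V(1)] .
    have es: "E z s" "Suc (d y s) = d y z" "Suc (d x s) = d x z" using s sx by (auto simp: par_def)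
    have et: "E z t" "Suc (d w t) = d w z" "Suc (d x t) = d x z" using t tx by (auto simp: par_def)
    have sV: "s \<in> V" "t \<in> V" using es et Ein2 by auto
    have dsw: "d s w = d z w"
    proof -
      have "d s w \<le> Suc (d t w)" using d_adj(1)[OF Est V(4)] .
      moreover have "d z w \<le> Suc (d s w)" using d_adj(1)[OF es(1) V(4)] .
      moreover have "Suc (d s w) \<noteq> d z w"
      proof
        assume "Suc (d s w) = d z w"
        then have "par w z s" using es by (simp add: par_def d_sym)
        then show False using False s by blast
      qed
      ultimately show ?thesis using et by (simp add: d_sym)
    qed
    have dty: "d t y = d y z"
    proof -
      have "d t y \<le> Suc (d s y)" using d_adj(1)[OF Esym[OF Est] V(2)] .
      moreover have "d z y \<le> Suc (d t y)" using d_adj(1)[OF et(1) V(2)] .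
      moreover have "Suc (d t y) \<noteq> d z y"
      proof
        assume "Suc (d t y) = d z y"
        then have "par y z t" using et by (simp add: par_def d_sym)
        then show False using False t by blast
      qed
      ultimately show ?thesis using es by (simp add: d_sym)
    qed
    have qle: "d y w \<le> d y s + d s w" using d_tri V sV by blast
    have stz: "s \<noteq> z" "t \<noteq> z" using es et Ene by auto
    have "Q y s t w" using IHFD[OF IH V(1) fz V(2) sV V(4)] stz dist by auto
    then have Qs: "d y t * d s w \<le> d y s * d t w + d s t * d y w" by (simp add: Q_def)
    have dst: "d s t = 1" using d_edge Est by simp
    obtain b' where b': "d y z = Suc b'" using es by (cases "d y z") auto
    obtain c' where c': "d z w = Suc c'" using et by (cases "d z w") (auto simp: d_sym)
    have ys: "d y s = b'" "d t w = c'" using es et b' c' by (auto simp: d_sym)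
    have "Suc b' * Suc c' \<le> b' * c' + d y w" using Qs dsw dty dst ys b' c' by (simp add: d_sym)
    then have "b' + c' + 1 \<le> d y w" by simp
    moreover have "d y w \<le> b' + Suc c'" using qle ys dsw c' by simp
    ultimately have "d y w + 1 = d y z + d z w" using b' c' by simp
    moreover have "\<exists>s. E s z \<and> d s y + 1 = d y z \<and> d s x + 1 = d x z \<and> d s w = d z w"
      using es dsw by (intro exI[of _ s]) (auto simp: d_sym Esym)
    moreover have "\<exists>t. E t z \<and> d t w + 1 = d z w \<and> d t x + 1 = d x z \<and> d t y = d y z"
      using et dty by (intro exI[of _ t]) (auto simp: d_sym Esym)
    ultimately show ?thesis by blast
  qed
qed

end

context cg2
begin

lemma far_lt: assumes "far r t" "\<And>u. far r u \<Longrightarrow> u = t" "s \<in> V" "s \<noteq> t" shows "d r s < d r t"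
proof -
  have "d r s \<le> d r t" using assms(1,3) unfolding far_def by blast
  moreover have "d r s \<noteq> d r t"
  proof
    assume "d r s = d r t"
    then have "far r s" using assms(1,3) unfolding far_def by simp
    then show False using assms(2,4) by blast
  qed
  ultimately show ?thesis by simp
qed

lemma lemD:
  assumes IH: IHF and V: "x\<in>V" "y\<in>V" "z\<in>V" "w\<in>V"
    and dist: "x\<noteq>y" "x\<noteq>z" "x\<noteq>w" "y\<noteq>z" "y\<noteq>w" "z\<noteq>w"
    and f: "far x z" "far z x" "far y w" "far w y"
    and u1: "\<And>t. far x t \<Longrightarrow> t = z" and u2: "\<And>t. far z t \<Longrightarrow> t = x"
    and u3: "\<And>t. far y t \<Longrightarrow> t = w" and u4: "\<And>t. far w t \<Longrightarrow> t = y"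
  shows "Q x y z w"
proof -
  have lt: "d x y < d x z" "d x w < d x z" "d z y < d z x" "d z w < d z x"
     "d y x < d y w" "d y z < d y w" "d w x < d w y" "d w z < d w y"
    using far_lt[OF f(1) u1] far_lt[OF f(2) u2] far_lt[OF f(3) u3] far_lt[OF f(4) u4] V dist by auto
  note C1 = corner[OF IH V dist f(1) u1 lt(1,2)]
  have dd: "w \<noteq> x" "w \<noteq> y" "w \<noteq> z" "z \<noteq> x" "z \<noteq> y" "y \<noteq> x" using dist by auto
  note C2 = corner[OF IH V(4) V(1) V(2) V(3) dd(1) dd(2) dd(3) dist(1) dist(2) dist(4) f(4) u4 lt(7,8)]
  note C3 = corner[OF IH V(2) V(3) V(4) V(1) dist(4) dist(5) dd(6) dist(6) dd(4) dd(1) f(3) u3 lt(6,5)]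
  note C4 = corner[OF IH V(3) V(4) V(1) V(2) dist(6) dd(4) dd(5) dd(1) dd(2) dist(1) f(2) u2 lt(4,3)]
  have q2: "Q w x y z \<longleftrightarrow> Q x y z w" "Q y z w x \<longleftrightarrow> Q x y z w" "Q z w x y \<longleftrightarrow> Q x y z w"
    using Q_rot[of w x y z] Q_rot[of x y z w] Q_rot[of z w x y] by blast+
  show ?thesis
  proof (rule ccontr)
    assume nQ: "\<not> Q x y z w"
    have c1: "d y w + 1 = d y z + d z w" using C1 nQ by blast
    have c2: "d x z + 1 = d x y + d y z"
      and v: "\<exists>t. E t y \<and> d t z + 1 = d y z \<and> d t w + 1 = d w y \<and> d t x = d x y"
      using C2 nQ q2 by blast+
    have c3: "d z x + 1 = d z w + d w x"
      and m: "\<exists>s. E s w \<and> d s z + 1 = d z w \<and> d s y + 1 = d y w \<and> d s x = d w x"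
      and g: "\<exists>t. E t w \<and> d t x + 1 = d w x \<and> d t y + 1 = d y w \<and> d t z = d z w"
      using C3 nQ q2 by blast+
    have c4: "d w y + 1 = d w x + d x y" using C4 nQ q2 by blast
    define a where "a = d x y"
    define b where "b = d y z"
    define c where "c = d z w"
    define e where "e = d x w"
    define p where "p = d x z"
    define q where "q = d y w"
    have eqs: "q + 1 = b + c" "p + 1 = a + b" "p + 1 = c + e" "q + 1 = e + a"
      using c1 c2 c3 c4 by (simp_all add: a_def b_def c_def e_def p_def q_def d_sym)
    then have ac: "a = c" "b = e" by auto
    have pos: "a \<ge> 1" "b \<ge> 1" using d_pos V dist by (auto simp: a_def b_def)
    have Qe: "Q x y z w \<longleftrightarrow> p * q \<le> a * c + b * e"
      by (simp add: Q_def a_def b_def c_def e_def p_def q_def)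
    have a2: "a \<ge> 2" "b \<ge> 2"
    proof -
      have "\<not> (a = 1 \<or> b = 1)"
      proof
        assume "a = 1 \<or> b = 1"
        then have "p * q \<le> a * c + b * e"
        proof
          assume "a = 1" then have "p = b" "q = b" "c = 1" using eqs ac by auto
          then show ?thesis using ac \<open>a = 1\<close> by simp
        next
          assume "b = 1" then have "p = a" "q = a" "e = 1" using eqs ac by auto
          then show ?thesis using ac \<open>b = 1\<close> by simp
        qed
        then show False using nQ Qe by simp
      qed
      then show "a \<ge> 2" "b \<ge> 2" using pos by auto
    qed
    obtain vv where vv: "E vv y" "d vv z + 1 = b" "d vv x = a" using v by (auto simp: b_def a_def)
    obtain mm where mm: "E mm w" "d mm z + 1 = c" "d mm x = e" using m by (auto simp: c_def e_def d_sym)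
    obtain gg where gg: "E gg w" "d gg x + 1 = e" "d gg z = c" using g by (auto simp: c_def e_def d_sym)
    have VV: "vv \<in> V" "mm \<in> V" "gg \<in> V" using vv mm gg Ein1 by auto
    have Iv: "d x vv + d vv z = d x z" using vv eqs by (simp add: d_sym p_def)
    have Im: "d x mm + d mm z = d x z" using mm eqs by (simp add: d_sym p_def)
    have Ig: "d x gg + d gg z = d x z" using gg eqs by (simp add: d_sym p_def)
    have dyv: "d y vv = 1" "d mm w = 1" "d gg w = 1" using vv mm gg d_edge Esym by (auto simp: d_sym)
    have qle: "q \<le> d vv mm + 2"
    proof -
      have "d y w \<le> d y vv + d vv w" using d_tri V VV by blast
      moreover have "d vv w \<le> d vv mm + d mm w" using d_tri V VV by blast
      ultimately show ?thesis using dyv by (simp add: q_def)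
    qed
    show False
    proof (cases "a < b")
      case True
      have "d vv mm \<le> d x mm - d x vv" using claimI[OF V(1,3) VV(1,2) Iv Im] True mm vv ac by (simp add: d_sym)
      then show False using qle True mm vv ac eqs a2 by (simp add: d_sym)
    next
      case False
      show False
      proof (cases "b < a")
        case True
        have "d mm vv \<le> d x vv - d x mm" using claimI[OF V(1,3) VV(2,1) Im Iv] True mm vv ac by (simp add: d_sym)
        then show False using qle True mm vv ac eqs a2 by (simp add: d_sym)
      next
        case False
        then have ab: "a = b" using \<open>\<not> a < b\<close> by simp
        show False
        proof (cases "a \<ge> 3")
          case True
          have "vv = mm \<or> E vv mm" using claimS[OF V(1,3) VV(1,2) Iv Im] mm vv ac ab by (simp add: d_sym)
          then have "d vv mm \<le> 1" using d_refl VV d_edge by auto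
          then show False using qle True ab eqs by simp
        next
          case False
          then have a22: "a = 2" "b = 2" using a2 ab by auto
          have "d gg vv \<le> d x vv - d x gg" using claimI[OF V(1,3) VV(3,1) Ig Iv] gg vv ac a22 by (simp add: d_sym)
          then have dgv1: "d gg vv \<le> 1" using gg vv ac a22 by (simp add: d_sym)
          have "gg \<noteq> vv" using gg vv ac a22 by (auto simp: d_sym)
          then have dgv: "d gg vv = 1" using dgv1 d_pos VV by fastforce
          have "d w vv \<le> d w gg + d gg vv" using d_tri V VV by blast
          moreover have "d y w \<le> d y vv + d vv w" using d_tri V VV by blast
          ultimately have dwv: "d w vv = 2" using dgv dyv eqs a22 by (simp add: d_sym q_def)
          have "d w gg + d gg vv + d vv z = d w z"
            using P2D[OF V(4) VV(3) VV(1) V(3) \<open>gg \<noteq> vv\<close>] dgv dwv dyv gg vv ac a22 by (simp add: d_sym)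
          then show False using dgv dyv vv ac a22 by (simp add: d_sym c_def)
        qed
      qed
    qed
  qed
qed

end

context cg
begin

lemma Q_syms:
  "Q y z w x \<longleftrightarrow> Q x y z w" "Q z w x y \<longleftrightarrow> Q x y z w" "Q w x y z \<longleftrightarrow> Q x y z w"
  "Q x w z y \<longleftrightarrow> Q x y z w" "Q w z y x \<longleftrightarrow> Q x y z w" "Q z y x w \<longleftrightarrow> Q x y z w"
  "Q y x w z \<longleftrightarrow> Q x y z w"
proof -
  have r1: "Q x y z w \<longleftrightarrow> Q y z w x" by (rule Q_rot)
  have r2: "Q y z w x \<longleftrightarrow> Q z w x y" by (rule Q_rot)
  have r3: "Q z w x y \<longleftrightarrow> Q w x y z" by (rule Q_rot)
  have f1: "Q x y z w \<longleftrightarrow> Q x w z y" by (rule Q_refl)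
  have f2: "Q w x y z \<longleftrightarrow> Q w z y x" by (rule Q_refl)
  have f3: "Q z w x y \<longleftrightarrow> Q z y x w" by (rule Q_refl)
  have f4: "Q y z w x \<longleftrightarrow> Q y x w z" by (rule Q_refl)
  show "Q y z w x \<longleftrightarrow> Q x y z w" "Q z w x y \<longleftrightarrow> Q x y z w" "Q w x y z \<longleftrightarrow> Q x y z w"
  "Q x w z y \<longleftrightarrow> Q x y z w" "Q w z y x \<longleftrightarrow> Q x y z w" "Q z y x w \<longleftrightarrow> Q x y z w"
  "Q y x w z \<longleftrightarrow> Q x y z w"
    using r1 r2 r3 f1 f2 f3 f4 by blast+
qed

end

context cg2
begin

lemma main:
  assumes IH: IHF and V: "x\<in>V" "y\<in>V" "z\<in>V" "w\<in>V"
  shows "Q x y z w"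
proof -
  have Qe: "Q x y z w \<longleftrightarrow> d x z * d y w \<le> d x y * d z w + d y z * d x w" by (simp add: Q_def)
  show ?thesis
  proof (cases "x = y \<or> y = z \<or> z = w \<or> x = w \<or> x = z \<or> y = w")
    case True
    then show ?thesis using V d_refl by (auto simp: Q_def d_sym mult.commute)
  next
    case False
    then have dist: "x\<noteq>y" "x\<noteq>z" "x\<noteq>w" "y\<noteq>z" "y\<noteq>w" "z\<noteq>w" by auto
    have pos: "d x y \<ge> 1" "d y z \<ge> 1" "d z w \<ge> 1" "d x w \<ge> 1" using d_pos V dist by auto
    have tri1: "d y w \<le> d x y + d x w" using d_tri[of y x w] V by (simp add: d_sym)
    have tri2: "d x z \<le> d x y + d y z" using d_tri[of x y z] V by simp
    have m1: "d x y \<le> d x y * d z w" "d x w \<le> d y z * d x w" "d y z \<le> d y z * d x w"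
      using pos by simp_all
    show ?thesis
    proof (cases "d x z \<le> 1")
      case True
      then have "d x z = 1" using d_pos V dist by fastforce
      then show ?thesis using Qe tri1 m1 by simp
    next
      case p2: False
      show ?thesis
      proof (cases "d y w \<le> 1")
        case True
        then have "d y w = 1" using d_pos V dist by fastforce
        then show ?thesis using Qe tri2 m1 by simp
      next
        case q2: False
        have p2': "2 \<le> d x z" "2 \<le> d y w" "2 \<le> d z x" "2 \<le> d w y" using p2 q2 by (auto simp: d_sym)
        show ?thesis
        proof (cases "\<exists>r t. r \<in> {x,y,z,w} \<and> far r t \<and> t \<notin> {x,y,z,w}")
          case True
          then obtain r t where rt: "r \<in> {x,y,z,w}" "far r t" "t \<notin> {x,y,z,w}" by blast
          have "r \<in> V" using rt V by auto
          then show ?thesis using IHFD[OF IH _ rt(2) V] rt(3) by auto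
        next
          case F1: False
          show ?thesis
          proof (cases "far y z \<or> far z y \<or> far x y \<or> far y x \<or> far z w \<or> far w z \<or> far w x \<or> far x w")
            case True
            then show ?thesis
            proof (elim disjE)
              assume "far y z" then show ?thesis using lemA[OF IH V dist p2'(1)] by blast
            next
              assume h: "far z y"
              have "Q w z y x" using lemA[OF IH V(4,3,2,1) _ _ _ _ _ _ p2'(4) h] dist by auto
              then show ?thesis using Q_syms by blast
            next
              assume h: "far x y"
              have "Q w x y z" using lemA[OF IH V(4,1,2,3) _ _ _ _ _ _ p2'(4) h] dist by auto
              then show ?thesis using Q_syms by blast
            next
              assume h: "far y x"
              have "Q z y x w" using lemA[OF IH V(3,2,1,4) _ _ _ _ _ _ p2'(3) h] dist by auto
              then show ?thesis using Q_syms by blast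
            next
              assume h: "far z w"
              have "Q y z w x" using lemA[OF IH V(2,3,4,1) _ _ _ _ _ _ p2'(2) h] dist by auto
              then show ?thesis using Q_syms by blast
            next
              assume h: "far w z"
              have "Q x w z y" using lemA[OF IH V(1,4,3,2) _ _ _ _ _ _ p2'(1) h] dist by auto
              then show ?thesis using Q_syms by blast
            next
              assume h: "far w x"
              have "Q z w x y" using lemA[OF IH V(3,4,1,2) _ _ _ _ _ _ p2'(3) h] dist by auto
              then show ?thesis using Q_syms by blast
            next
              assume h: "far x w"
              have "Q y x w z" using lemA[OF IH V(2,1,4,3) _ _ _ _ _ _ p2'(2) h] dist by auto
              then show ?thesis using Q_syms by blast
            qed
          next
            case F2: False
            have nself: "\<not> far r r" if "r \<in> {x,y,z,w}" for r
            proof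
              assume fr: "far r r"
              have "\<forall>s\<in>V. d r s = 0" using fr d_refl that V unfolding far_def by fastforce
              then show False using that V dist d_zero by blast
            qed
            have u1: "t = z" if "far x t" for t using F1 F2 nself that V by blast
            have u2: "t = x" if "far z t" for t using F1 F2 nself that V by blast
            have u3: "t = w" if "far y t" for t using F1 F2 nself that V by blast
            have u4: "t = y" if "far w t" for t using F1 F2 nself that V by blast
            have f: "far x z" "far z x" "far y w" "far w y"
              using far_ex[OF V(1)] far_ex[OF V(3)] far_ex[OF V(2)] far_ex[OF V(4)] u1 u2 u3 u4 by blast+
            show ?thesis using lemD[OF IH V dist f u1 u2 u3 u4] .
          qed
        qed
      qed
    qed
  qed
qed

end

theorem hard: "cg2 V E \<Longrightarrow> ptolemaic V E"
proof (induction "card V" arbitrary: V E rule: less_induct)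
  case (less V E)
  interpret cg2 V E by fact
  have IH: IHF unfolding IHF_def
  proof (intro allI impI ballI)
    fix r t x y z w assume r: "r \<in> V" "far r t" and xs: "x \<in> V - {t}" "y \<in> V - {t}" "z \<in> V - {t}" "w \<in> V - {t}"
    show "Q x y z w"
    proof (cases "r = t")
      case True
      have "x = r" using r xs True d_refl d_zero unfolding far_def by fastforce
      then show ?thesis using xs True by simp
    next
      case False
      have tV: "t \<in> V" using r by (simp add: far_def)
      have c2: "cg2 (V - {t}) (\<lambda>u v. E u v \<and> u \<noteq> t \<and> v \<noteq> t)" using remove_cg2[OF r(2) False r(1)] .
      have "card (V - {t}) < card V" by (rule card_Diff1_less[OF finV tV])
      then have "ptolemaic (V - {t}) (\<lambda>u v. E u v \<and> u \<noteq> t \<and> v \<noteq> t)" using less.hyps c2 by blast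
      then show ?thesis using xs remove_d[OF r(2) False r(1)] unfolding ptolemaic_def Q_def by auto
    qed
  qed
  show ?case unfolding ptolemaic_def using main[OF IH] unfolding Q_def by auto
qed

context cg
begin

abbreviation P2f where "P2f \<equiv> (\<forall>x\<in>V. \<forall>y\<in>V. \<forall>z\<in>V. \<forall>w\<in>V.
              y \<noteq> z \<and> d x y + d y z = d x z \<and> d y z + d z w = d y w
              \<longrightarrow> d x y + d y z + d z w = d x w)"
abbreviation P3f where "P3f \<equiv> (\<forall>x\<in>V. \<forall>y\<in>V. \<forall>z\<in>V. \<forall>w\<in>V.
              d x y + d y z = d x z \<and> d y z + d z w = d y w \<and> d x y = 1 \<and> d y z = 1
              \<longrightarrow> d x y + d y z + d z w = d x w)"

lemma T_P2: assumes "ptolemaic V E" shows P2f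
proof (intro ballI impI)
  fix x y z w assume V: "x \<in> V" "y \<in> V" "z \<in> V" "w \<in> V"
    and h: "y \<noteq> z \<and> d x y + d y z = d x z \<and> d y z + d z w = d y w"
  have pt: "d x z * d y w \<le> d x y * d z w + d y z * d x w" using assms V by (auto simp: ptolemaic_def)
  have b: "d y z > 0" using d_pos V h by fastforce
  have eq: "(d x y + d y z) * (d y z + d z w) = d x y * d z w + d y z * (d x y + d y z + d z w)"
    by (simp add: algebra_simps)
  have "d y z * (d x y + d y z + d z w) \<le> d y z * d x w" using pt h eq by simp
  then have "d x y + d y z + d z w \<le> d x w" using b by simp
  moreover have "d x w \<le> d x y + d y z + d z w" using d_tri[of x y w] d_tri[of y z w] V by simp
  ultimately show "d x y + d y z + d z w = d x w" by simp
qed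

lemma P2_P3: assumes P2f shows P3f
proof (intro ballI impI)
  fix x y z w assume V: "x \<in> V" "y \<in> V" "z \<in> V" "w \<in> V"
    and h: "d x y + d y z = d x z \<and> d y z + d z w = d y w \<and> d x y = 1 \<and> d y z = 1"
  have "y \<noteq> z" using h d_refl V by auto
  then show "d x y + d y z + d z w = d x w" using assms V h by blast
qed

lemma P3_P2: assumes P3: P3f shows P2f
proof -
  have "\<forall>x\<in>V. \<forall>y\<in>V. \<forall>z\<in>V. \<forall>w\<in>V. d x y = n \<longrightarrow> y \<noteq> z \<and> d x y + d y z = d x z \<and> d y z + d z w = d y w
              \<longrightarrow> d x y + d y z + d z w = d x w" for n
  proof (induction n)
    case 0
    then show ?case using d_zero by fastforce
  next
    case (Suc k)
    show ?case
    proof (intro ballI impI)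
      fix x y z w assume V: "x \<in> V" "y \<in> V" "z \<in> V" "w \<in> V" and n: "d x y = Suc k"
        and h: "y \<noteq> z \<and> d x y + d y z = d x z \<and> d y z + d z w = d y w"
      obtain x1 where x1: "E y x1" "d x1 x = k" using d_parent[OF V(2,1)] n by (auto simp: d_sym)
      obtain b where b: "d y z = Suc b" using d_pos V h by (cases "d y z") fastforce+
      obtain z1 where z1: "E y z1" "d z1 z = b" using d_parent[OF V(2,3) b] by blast
      have V1: "x1 \<in> V" "z1 \<in> V" using x1 z1 Ein2 by auto
      have "d x z \<le> d x x1 + d x1 z" using d_tri V V1 by blast
      moreover have "d x1 z \<le> Suc (d y z)" using d_adj(2)[OF x1(1) V(3)] .
      ultimately have dx1z: "d x1 z = Suc (d y z)" using h n x1 by (simp add: d_sym)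
      have "d x1 z \<le> d x1 z1 + d z1 z" using d_tri V V1 by blast
      moreover have "d x1 z1 \<le> d x1 y + d y z1" using d_tri V V1 by blast
      ultimately have dx1z1: "d x1 z1 = 2" using dx1z b z1 x1 d_edge Esym by (simp add: d_sym)
      have "d y w \<le> d y z1 + d z1 w" using d_tri V V1 by blast
      moreover have "d z1 w \<le> d z1 z + d z w" using d_tri V V1 by blast
      ultimately have dz1w: "d z1 w = b + d z w" using h b z1 d_edge by simp
      have e1: "d x1 y = 1" "d y z1 = 1" using d_edge x1 z1 Esym by (auto simp: d_sym)
      have pre: "d x1 y + d y z1 = d x1 z1 \<and> d y z1 + d z1 w = d y w \<and> d x1 y = 1 \<and> d y z1 = 1"
        using e1 dx1z1 dz1w h b by simp
      have "d x1 y + d y z1 + d z1 w = d x1 w"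
        using P3[rule_format, OF V1(1) V(2) V1(2) V(4) pre] .
      then have dx1w: "d x1 w = Suc (d y w)" using e1 dz1w h b by simp
      have "x1 \<noteq> y" using x1 Ene by auto
      moreover have "d x x1 + d x1 y = d x y" using x1 e1 n by (simp add: d_sym)
      moreover have "d x1 y + d y w = d x1 w" using e1 dx1w by simp
      moreover have "d x x1 = k" using x1 by (simp add: d_sym)
      ultimately have "d x x1 + d x1 y + d y w = d x w" using Suc.IH V V1 by blast
      then show "d x y + d y z + d z w = d x w" using e1 n h x1 by (simp add: d_sym)
    qed
  qed
  then show ?thesis by blast
qed

end

context cg
begin

lemma P3D: assumes P3f "x\<in>V" "y\<in>V" "z\<in>V" "w\<in>V" "d x y + d y z = d x z" "d y z + d z w = d y w"
  "d x y = 1" "d y z = 1" shows "d x y + d y z + d z w = d x w"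
  using assms by blast

lemma ip_dist:
  assumes P3: P3f and ip: "induced_path V E p"
  shows "i \<le> j \<Longrightarrow> j < length p \<Longrightarrow> d (p!i) (p!j) = j - i"
proof (induction "j - i" arbitrary: i rule: less_induct)
  case less
  have w: "walk V E p" and dp: "distinct p"
    and nc: "\<And>i j. i < length p \<Longrightarrow> j < length p \<Longrightarrow> Suc i < j \<Longrightarrow> \<not> E (p!i) (p!j)"
    using ip unfolding induced_path_def gpath_def by auto
  have pV: "\<And>k. k < length p \<Longrightarrow> p!k \<in> V" using w unfolding walk_def by auto
  have pE: "\<And>k. Suc k < length p \<Longrightarrow> E (p!k) (p!Suc k)" using w unfolding walk_def by auto
  show ?case
  proof (cases "j = i")
    case True then show ?thesis using d_refl pV less.prems by simp
  next
    case False
    show ?thesis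
    proof (cases "j = Suc i")
      case True then show ?thesis using d_edge pE less.prems by simp
    next
      case False
      then have ij: "Suc (Suc i) \<le> j" using \<open>j \<noteq> i\<close> less.prems by simp
      have ih1: "d (p ! Suc i) (p ! j) = j - Suc i" using less.hyps[of "Suc i"] ij less.prems by simp
      have ih2: "d (p ! Suc (Suc i)) (p ! j) = j - Suc (Suc i)" using less.hyps[of "Suc (Suc i)"] ij less.prems by simp
      have ne: "p ! i \<noteq> p ! Suc (Suc i)" using dp ij less.prems by (simp add: nth_eq_iff_index_eq)
      have d2: "d (p!i) (p ! Suc (Suc i)) = 2"
        using d_two[OF ne nc[of i "Suc (Suc i)"] pE[of i] pE[of "Suc i"]] ij less.prems by simp
      have e1: "d (p!i) (p!Suc i) = 1" "d (p!Suc i) (p!Suc (Suc i)) = 1" using d_edge pE ij less.prems by auto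
      have ii: "i < length p" "Suc i < length p" "Suc (Suc i) < length p" using ij less.prems by auto
      have "d (p!i) (p!Suc i) + d (p!Suc i) (p!Suc (Suc i)) + d (p!Suc (Suc i)) (p!j) = d (p!i) (p!j)"
        by (rule P3D[OF P3 pV[OF ii(1)] pV[OF ii(2)] pV[OF ii(3)] pV[OF less.prems(2)]])
          (use e1 d2 ih1 ih2 ij in simp_all)
      then show ?thesis using e1 ih2 ij by simp
    qed
  qed
qed

lemma P3_DH: assumes P3: P3f shows "distance_hereditary V E"
  unfolding distance_hereditary_def shortest_path_def
proof (intro allI impI conjI)
  fix p assume ip: "induced_path V E p"
  then show "gpath V E p" by (simp add: induced_path_def)
  have ne: "p \<noteq> []" using ip by (simp add: induced_path_def gpath_def walk_def)
  have "d (p!0) (p!(length p - 1)) = length p - 1" using ip_dist[OF P3 ip, of 0 "length p - 1"] ne by simp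
  then show "length p - 1 = d (hd p) (last p)" using ne by (simp add: hd_conv_nth last_conv_nth)
qed

lemma P3_chordal: assumes P3: P3f shows "chordal V E"
  unfolding chordal_def
proof
  assume "\<exists>c. induced_cycle V E c \<and> 4 \<le> length c"
  then obtain c where ic: "induced_cycle V E c" and k4: "4 \<le> length c" by blast
  define k where "k = length c"
  have dc: "distinct c" and cV: "set c \<subseteq> V"
    and cE: "\<And>i. i < k \<Longrightarrow> E (c!i) (c!(Suc i mod k))"
    and cN: "\<And>i j. i < k \<Longrightarrow> j < k \<Longrightarrow> E (c!i) (c!j) \<Longrightarrow> j = Suc i mod k \<or> i = Suc j mod k"
    using ic unfolding induced_cycle_def k_def by auto
  have cVk: "\<And>i. i < k \<Longrightarrow> c!i \<in> V" using cV k_def by auto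
  show False
  proof (cases "k = 4")
    case True
    have e1: "E (c!0) (c!1)" using cE[of 0] True by simp
    have e2: "E (c!1) (c!2)" using cE[of 1] True by (simp add: numeral_2_eq_2)
    have e3: "E (c!2) (c!3)" using cE[of 2] True by simp
    have e4: "E (c!3) (c!0)" using cE[of 3] True by simp
    note e = e1 e2 e3 e4
    have n02: "\<not> E (c!0) (c!2)" using cN[of 0 2] True by auto
    have n13: "\<not> E (c!1) (c!3)" using cN[of 1 3] True by auto
    have ne: "c!0 \<noteq> c!2" "c!1 \<noteq> c!3" using dc True k_def by (auto simp: nth_eq_iff_index_eq)
    have d2: "d (c!0) (c!2) = 2" "d (c!1) (c!3) = 2"
      using d_two[OF ne(1) n02 e(1) e(2)] d_two[OF ne(2) n13 e(2) e(3)] by auto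
    have d1: "d (c!0) (c!1) = 1" "d (c!1) (c!2) = 1" "d (c!2) (c!3) = 1" "d (c!0) (c!3) = 1"
      using d_edge e Esym by auto
    have cv: "c!0 \<in> V" "c!1 \<in> V" "c!2 \<in> V" "c!3 \<in> V" using cVk True by auto
    have "d (c!0) (c!1) + d (c!1) (c!2) + d (c!2) (c!3) = d (c!0) (c!3)"
      by (rule P3D[OF P3 cv]) (use d1 d2 in simp_all)
    then show False using d1 by simp
  next
    case False
    then have k5: "5 \<le> k" using k4 k_def by simp
    define p where "p = take (k - 1) c"
    have lp: "length p = k - 1" using k_def p_def by simp
    have pn: "\<And>i. i < k - 1 \<Longrightarrow> p!i = c!i" using p_def by simp
    have ip: "induced_path V E p"
      unfolding induced_path_def gpath_def walk_def
    proof (intro conjI allI impI)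
      show "p \<noteq> []" using lp k5 by auto
      show "set p \<subseteq> V" using cV p_def by (meson order_trans set_take_subset)
      show "distinct p" using dc p_def by simp
    next
      fix i assume i: "Suc i < length p"
      then have "Suc i mod k = Suc i" using lp by simp
      then show "E (p!i) (p!Suc i)" using cE[of i] pn i lp by simp
    next
      fix i j assume h: "i < length p \<and> j < length p \<and> Suc i < j"
      show "\<not> E (p!i) (p!j)"
      proof
        assume "E (p!i) (p!j)"
        then have "E (c!i) (c!j)" using pn h lp by simp
        moreover have "i < k" "j < k" using h lp by auto
        ultimately have "j = Suc i mod k \<or> i = Suc j mod k" using cN by blast
        moreover have "Suc i < k" "Suc j < k" using h lp by auto
        then have "Suc i mod k = Suc i" "Suc j mod k = Suc j" by simp_all
        ultimately show False using h by simp
      qed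
    qed
    have "d (p!0) (p!(k-2)) = k - 2" using ip_dist[OF P3 ip, of 0 "k-2"] lp k5 by simp
    then have dd: "d (c!0) (c!(k-2)) = k - 2" using pn k5 by simp
    have e1: "E (c!(k-2)) (c!(k-1))" using cE[of "k-2"] k5 by (simp add: Suc_diff_Suc numeral_2_eq_2)
    have e2: "E (c!(k-1)) (c!0)" using cE[of "k-1"] k5 by simp
    have "d (c!0) (c!(k-2)) \<le> d (c!0) (c!(k-1)) + d (c!(k-1)) (c!(k-2))"
      using d_tri cVk k5 by simp
    also have "\<dots> = 2" using d_edge e1 e2 Esym by simp
    finally show False using dd k5 by simp
  qed
qed

end

context cg
begin

lemma CD_P3: assumes ch: "chordal V E" and dh: "distance_hereditary V E" shows P3f
proof (intro ballI impI)
  fix x y z w assume V: "x \<in> V" "y \<in> V" "z \<in> V" "w \<in> V"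
    and h: "d x y + d y z = d x z \<and> d y z + d z w = d y w \<and> d x y = 1 \<and> d y z = 1"
  have exy: "E x y" "E y z" using d_one V h by auto
  have dxz: "d x z = 2" using h by simp
  define c where "c = d z w"
  have dyw: "d y w = Suc c" using h c_def by simp
  obtain g where g: "walk V E g" "hd g = z" "last g = w" "length g = Suc c" using d_ex[OF V(3,4)] c_def by blast
  have gne: "g \<noteq> []" using g by auto
  have gV: "\<And>i. i \<le> c \<Longrightarrow> g!i \<in> V" using g unfolding walk_def by auto
  have gE: "\<And>i. i < c \<Longrightarrow> E (g!i) (g!Suc i)" using g unfolding walk_def by auto
  have g0: "g!0 = z" using g gne by (simp add: hd_conv_nth)
  have gc: "g!c = w" using g gne by (simp add: last_conv_nth)
  have gup: "d (g!i) (g!j) \<le> j - i" if "i \<le> j" "j \<le> c" for i j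
    using that
  proof (induction j)
    case 0 then show ?case using d_refl gV by simp
  next
    case (Suc j)
    show ?case
    proof (cases "i = Suc j")
      case True then show ?thesis using d_refl gV Suc.prems by simp
    next
      case False
      then have "d (g!i) (g!j) \<le> j - i" using Suc by simp
      moreover have "d (g!i) (g!Suc j) \<le> d (g!i) (g!j) + d (g!j) (g!Suc j)" using d_tri gV Suc.prems by simp
      moreover have "d (g!j) (g!Suc j) = 1" using d_edge gE Suc.prems by simp
      ultimately show ?thesis using False Suc.prems by simp
    qed
  qed
  have gd: "d (g!i) (g!j) = j - i" if "i \<le> j" "j \<le> c" for i j
  proof -
    have "d (g!0) (g!c) \<le> d (g!0) (g!i) + d (g!i) (g!c)" using d_tri gV that by simp
    moreover have "d (g!i) (g!c) \<le> d (g!i) (g!j) + d (g!j) (g!c)" using d_tri gV that by simp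
    moreover have "d (g!0) (g!i) \<le> i" using gup[of 0 i] that by simp
    moreover have "d (g!j) (g!c) \<le> c - j" using gup[of j c] that by simp
    moreover have "d (g!0) (g!c) = c" using g0 gc c_def by simp
    ultimately show ?thesis using gup[OF that] that by simp
  qed
  have yd: "d y (g!i) = Suc i" if "i \<le> c" for i
  proof -
    have "d y (g!i) \<le> d y z + d z (g!i)" using d_tri V gV that by blast
    moreover have "d z (g!i) = i" using gd[of 0 i] that g0 by simp
    moreover have "d y w \<le> d y (g!i) + d (g!i) w" using d_tri V gV that by blast
    moreover have "d (g!i) w = c - i" using gd[of i c] that gc by simp
    ultimately show ?thesis using h dyw that by simp
  qed
  have gdist: "g!i \<noteq> g!j" if "i \<le> c" "j \<le> c" "i \<noteq> j" for i j
  proof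
    assume "g!i = g!j"
    then show False using gd[of i j] gd[of j i] d_refl gV that by (cases "i \<le> j") auto
  qed
  have ying: "y \<noteq> g!i" if "i \<le> c" for i using yd[OF that] d_refl V by auto
  have xing: "x \<noteq> g!i" if "i \<le> c" for i
  proof
    assume xg: "x = g!i"
    then have "d y (g!i) = 1" using h by (simp add: d_sym)
    then have "i = 0" using yd that by simp
    then show False using xg g0 dxz d_refl V by simp
  qed
  have xy: "x \<noteq> y" using exy Ene by auto
  have Eyg: "E y (g!i) \<Longrightarrow> i \<le> c \<Longrightarrow> i = 0" for i using yd d_edge by fastforce
  have Egg: "E (g!i) (g!j) \<Longrightarrow> i \<le> c \<Longrightarrow> j \<le> c \<Longrightarrow> j = Suc i \<or> i = Suc j" for i j
    using d_edge gd[of i j] gd[of j i] by (cases "i \<le> j") (auto simp: d_sym)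
  show "d x y + d y z + d z w = d x w"
  proof (cases "\<exists>i \<le> c. E x (g!i)")
    case False
    define L where "L = x # y # g"
    have wL: "walk V E L" unfolding L_def
      using walk_Cons[OF walk_Cons[OF g(1)] _ V(1)] g(2) exy V by simp
    have dL: "distinct L" unfolding L_def distinct.simps
    proof (intro conjI)
      show "distinct g" unfolding distinct_conv_nth using gdist g(4) by auto
      show "y \<notin> set g" unfolding in_set_conv_nth using ying g(4) by (metis less_Suc_eq_le)
      have "x \<notin> set g" unfolding in_set_conv_nth using xing g(4) by (metis less_Suc_eq_le)
      then show "x \<notin> set (y # g)" using xy by simp
    qed
    have iL: "induced_path V E L" unfolding induced_path_def gpath_def
    proof (intro conjI allI impI)
      show "walk V E L" "distinct L" by fact+
      fix i j assume ij: "i < length L \<and> j < length L \<and> Suc i < j"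
      then obtain j' where j': "j = Suc (Suc j')" "j' \<le> c" using g(4) L_def
        by (cases j; cases "j - 1") auto
      have Lj: "L!j = g!j'" using j' L_def by simp
      show "\<not> E (L!i) (L!j)"
      proof (cases i)
        case 0 then show ?thesis using Lj L_def False j' by auto
      next
        case (Suc i')
        show ?thesis
        proof (cases i')
          case 0
          then have "j' \<noteq> 0" using ij j' Suc by simp
          then show ?thesis using Lj L_def Suc 0 Eyg j' by auto
        next
          case (Suc i'')
          then have Li: "L!i = g!i''" using \<open>i = Suc i'\<close> L_def by simp
          have "i'' \<le> c" "Suc i'' < j'" using ij j' \<open>i = Suc i'\<close> Suc by auto
          then show ?thesis using Li Lj Egg[of i'' j'] j' by auto
        qed
      qed
    qed
    then have "length L - 1 = d (hd L) (last L)" using dh unfolding distance_hereditary_def shortest_path_def by blast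
    then have "d x w = Suc (Suc c)" using L_def g gne by (simp add: last_conv_nth)
    then show ?thesis using h c_def by simp
  next
    case True
    define i0 where "i0 = (LEAST i. i \<le> c \<and> E x (g!i))"
    have i0: "i0 \<le> c" "E x (g!i0)" using LeastI_ex[OF True] unfolding i0_def by auto
    have imin: "\<not> E x (g!i)" if "i < i0" for i
      using not_less_Least[of i "\<lambda>i. i \<le> c \<and> E x (g!i)"] that i0 unfolding i0_def by auto
    have i0p: "i0 \<noteq> 0"
    proof
      assume "i0 = 0"
      then have "d x z = 1" using i0 g0 d_edge by simp
      then show False using dxz by simp
    qed
    have Exg: "E x (g!m) \<Longrightarrow> m \<le> i0 \<Longrightarrow> m = i0" for m using imin[of m] by (cases "m < i0") auto
    define C where "C = x # y # take (Suc i0) g"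
    define n where "n = Suc (Suc (Suc i0))"
    have lC: "length C = n" using C_def n_def g(4) i0 by simp
    have C0: "C!0 = x" "C!1 = y" using C_def by auto
    have Cm: "C!(Suc (Suc m)) = g!m" if "m \<le> i0" for m using that C_def by simp
    have idx: "i = 0 \<or> i = 1 \<or> (\<exists>m. m \<le> i0 \<and> i = Suc (Suc m))" if "i < n" for i
      using that n_def by (cases i; cases "i - 1") auto
    have m1: "Suc 0 mod n = 1" "Suc 1 mod n = 2" using n_def i0p by auto
    have m2: "Suc (Suc (Suc m)) mod n = Suc (Suc (Suc m))" if "m < i0" for m using that n_def by simp
    have m3: "Suc (Suc (Suc i0)) mod n = 0" using n_def by simp
    have ic: "induced_cycle V E C" unfolding induced_cycle_def
    proof (intro conjI allI impI)
      show "3 \<le> length C" using lC n_def by simp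
      show "distinct C" unfolding C_def distinct.simps
      proof (intro conjI)
        show "distinct (take (Suc i0) g)" unfolding distinct_conv_nth using gdist g(4) i0 by auto
        have "y \<notin> set g" unfolding in_set_conv_nth using ying g(4) by (metis less_Suc_eq_le)
        then show "y \<notin> set (take (Suc i0) g)" by (meson in_set_takeD)
        have "x \<notin> set g" unfolding in_set_conv_nth using xing g(4) by (metis less_Suc_eq_le)
        then show "x \<notin> set (y # take (Suc i0) g)" using xy by (auto dest: in_set_takeD)
      qed
      show "set C \<subseteq> V" using C_def V g(1) unfolding walk_def by (auto dest: in_set_takeD)
    next
      fix i assume i: "i < length C"
      have "i = 0 \<or> i = 1 \<or> (\<exists>m. m \<le> i0 \<and> i = Suc (Suc m))" using idx i lC by simp
      then show "E (C!i) (C!(Suc i mod length C))"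
      proof (elim disjE exE conjE)
        assume "i = 0" then show ?thesis using C0 m1 lC exy by simp
      next
        assume "i = 1" then show ?thesis using C0 m1 lC exy Cm[of 0] g0 by (simp add: numeral_2_eq_2)
      next
        fix m assume m: "m \<le> i0" "i = Suc (Suc m)"
        show ?thesis
        proof (cases "m < i0")
          case True
          then show ?thesis using m m2 lC Cm[of m] Cm[of "Suc m"] gE[of m] i0 by simp
        next
          case False
          then have "m = i0" using m by simp
          then show ?thesis using m m3 lC Cm[of i0] C0 i0 Esym by simp
        qed
      qed
    next
      fix i j assume i: "i < length C" and j: "j < length C" and e: "E (C!i) (C!j)"
      have jj: "j = 0 \<or> j = 1 \<or> (\<exists>m. m \<le> i0 \<and> j = Suc (Suc m))" using idx j lC by simp
      have "i = 0 \<or> i = 1 \<or> (\<exists>m. m \<le> i0 \<and> i = Suc (Suc m))" using idx i lC by simp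
      then show "j = Suc i mod length C \<or> i = Suc j mod length C"
      proof (elim disjE exE conjE)
        assume i0': "i = 0"
        show ?thesis using jj
        proof (elim disjE exE conjE)
          assume "j = 0" then show ?thesis using i0' e Eirr by simp
        next
          assume "j = 1" then show ?thesis using i0' m1 lC by simp
        next
          fix m' assume m': "m' \<le> i0" "j = Suc (Suc m')"
          then have "m' = i0" using Exg e i0' C0 Cm by simp
          then show ?thesis using m' i0' m3 lC by simp
        qed
      next
        assume i1: "i = 1"
        show ?thesis using jj
        proof (elim disjE exE conjE)
          assume "j = 0" then show ?thesis using i1 m1 lC by simp
        next
          assume "j = 1" then show ?thesis using i1 e Eirr by simp
        next
          fix m' assume m': "m' \<le> i0" "j = Suc (Suc m')"
          then have "m' = 0" using Eyg e i1 C0 Cm i0 by simp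
          then show ?thesis using m' i1 m1 lC by (simp add: numeral_2_eq_2)
        qed
      next
        fix m assume m: "m \<le> i0" "i = Suc (Suc m)"
        show ?thesis using jj
        proof (elim disjE exE conjE)
          assume j0: "j = 0"
          then have "m = i0" using Exg e m C0 Cm Esym by simp
          then show ?thesis using m j0 m3 lC by simp
        next
          assume j1: "j = 1"
          then have "m = 0" using Eyg e m C0 Cm i0 Esym by simp
          then show ?thesis using m j1 m1 lC by (simp add: numeral_2_eq_2)
        next
          fix m' assume m': "m' \<le> i0" "j = Suc (Suc m')"
          then have "m' = Suc m \<or> m = Suc m'" using Egg[of m m'] e m Cm i0 by simp
          then show ?thesis
          proof
            assume "m' = Suc m"
            then show ?thesis using m m' m2[of m] lC by simp
          next
            assume "m = Suc m'"
            then show ?thesis using m m' m2[of m'] lC by simp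
          qed
        qed
      qed
    qed
    moreover have "4 \<le> length C" using lC n_def i0p by simp
    ultimately show ?thesis using ch unfolding chordal_def by blast
  qed
qed

end

theorem propositionB1:
  fixes V :: "'a set" and E :: "'a \<Rightarrow> 'a \<Rightarrow> bool"
  assumes "simple_graph V E" and "connected_graph V E"
  defines "d \<equiv> gdist V E"
  defines "P2 \<equiv> (\<forall>x\<in>V. \<forall>y\<in>V. \<forall>z\<in>V. \<forall>w\<in>V.
              y \<noteq> z \<and> d x y + d y z = d x z \<and> d y z + d z w = d y w
              \<longrightarrow> d x y + d y z + d z w = d x w)"
  defines "P3 \<equiv> (\<forall>x\<in>V. \<forall>y\<in>V. \<forall>z\<in>V. \<forall>w\<in>V.
              d x y + d y z = d x z \<and> d y z + d z w = d y w \<and> d x y = 1 \<and> d y z = 1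
              \<longrightarrow> d x y + d y z + d z w = d x w)"
  shows "(ptolemaic V E \<longleftrightarrow> P2) \<and> (ptolemaic V E \<longleftrightarrow> P3)
         \<and> (ptolemaic V E \<longleftrightarrow> chordal V E \<and> distance_hereditary V E)"
proof -
  have cgG: "cg V E" using assms(1,2) by (rule cg.intro)
  interpret G: cg V E by (rule cgG)
  have TP2: "ptolemaic V E \<Longrightarrow> P2" unfolding P2_def d_def using G.T_P2 by blast
  have P2T: "P2 \<Longrightarrow> ptolemaic V E"
  proof -
    assume "P2"
    then have "cg2 V E" using cgG unfolding P2_def d_def by (intro cg2.intro cg2_axioms.intro)
    then show ?thesis by (rule hard)
  qed
  have P23: "P2 \<Longrightarrow> P3" unfolding P2_def P3_def d_def using G.P2_P3 by blast
  have P32: "P3 \<Longrightarrow> P2" unfolding P2_def P3_def d_def using G.P3_P2 by blast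
  have P3CD: "P3 \<Longrightarrow> chordal V E \<and> distance_hereditary V E"
    unfolding P3_def d_def using G.P3_DH G.P3_chordal by blast
  have CDP3: "chordal V E \<and> distance_hereditary V E \<Longrightarrow> P3"
    unfolding P3_def d_def using G.CD_P3 by blast
  show ?thesis using TP2 P2T P23 P32 P3CD CDP3 by blast
qed

end
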